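(* Assume $|\mathcal S|\ge2$, let $\epsilon,\delta>0$, let $\mathcal V_j\in\mathcal S$, and set $$r^b_{max}=\frac{\epsilon\delta}{\max_{\mathcal V_i\in\mathcal S\setminus\{\mathcal V_j\}}\frac{1}{|F(\mathcal V_i)|}\sum_{v_s\in F(\mathcal V_i)}d(v_s)}.$$ Then GBP$(G,\mathcal S,\mathcal V_j,r^b_{max})$ terminates, and its output $\hat\pi_d(\mathcal V_i,\mathcal V_j)$ is an $(\epsilon,\delta)$-approximation of $\pi_d(\mathcal V_i,\mathcal V_j)$ for every $\mathcal V_i\in\mathcal S$ with $\mathcal V_i\ne\mathcal V_j$.
   Context: $G=(V,E)$ is a directed graph with $n$ nodes and $m$ edges, no self-loops, and every node of out-degree $d(v)\ge1$; $\alpha\in(0,1)$. PPR $\pi(u,v)$: probability that a random walk from $u$ which at each step stops with probability $\alpha$ and otherwise moves to a uniformly random out-neighbor stops at $v$; $\pi_d(u,v)=d(u)\pi(u,v)$. A collection $\mathcal S=\{\mathcal V_1,\dots,\mathcal V_k\}$ of supernodes is given, each $\mathcal V_i$ having a nonempty leaf set $F(\mathcal V_i)\subseteq V$, the leaf sets being pairwise disjoint. For supernodes, $\pi_d(\mathcal V_i,\mathcal V_j)=\frac{1}{|F(\mathcal V_i)||F(\mathcal V_j)|}\sum_{v_s\in F(\mathcal V_i),v_t\in F(\mathcal V_j)}\pi_d(v_s,v_t)$. A value $\hat x$ is an $(\epsilon,\delta)$-approximation of $x\ge0$ if $|\hat x-x|\le\epsilon\delta$ when $x<\delta$, and $|\hat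 x-x|\le\epsilon x$ when $x\ge\delta$. Procedure GBP$(G,\mathcal S,\mathcal V_j,r^b_{max})$: set $\hat\pi_d(\mathcal V_i,\mathcal V_j)=0$ for all $\mathcal V_i\in\mathcal S$; set $r(v,\mathcal V_j)=1/|F(\mathcal V_j)|$ for $v\in F(\mathcal V_j)$ and $0$ otherwise. While some $v_k\in V$ has $r(v_k,\mathcal V_j)>r^b_{max}$, pick any such $v_k$ and: if $v_k\in F(\mathcal V_i)$ for some $\mathcal V_i\in\mathcal S$, add $\alpha\,d(v_k)\,r(v_k,\mathcal V_j)/|F(\mathcal V_i)|$ to $\hat\pi_d(\mathcal V_i,\mathcal V_j)$; for each in-neighbor $v_i$ of $v_k$ add $(1-\alpha)\,r(v_k,\mathcal V_j)/d(v_i)$ to $r(v_i,\mathcal V_j)$; then set $r(v_k,\mathcal V_j)=0$. Output the values $\hat\pi_d(\cdot,\mathcal V_j)$. *)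

theory Defs
  imports Complex_Main
begin

definition out_nbrs :: "('a \<times> 'a) set \<Rightarrow> 'a \<Rightarrow> 'a set" where
  "out_nbrs E u = {w. (u, w) \<in> E}"

definition outdeg :: "('a \<times> 'a) set \<Rightarrow> 'a \<Rightarrow> nat" where
  "outdeg E u = card (out_nbrs E u)"

definition graph_ok :: "'a set \<Rightarrow> ('a \<times> 'a) set \<Rightarrow> bool" where
  "graph_ok V E \<longleftrightarrow> finite V \<and> E \<subseteq> V \<times> V \<and> (\<forall>v. (v, v) \<notin> E)
     \<and> (\<forall>v\<in>V. outdeg E v \<ge> 1)"

fun walk_prob :: "('a \<times> 'a) set \<Rightarrow> nat \<Rightarrow> 'a \<Rightarrow> 'a \<Rightarrow> real" where
  "walk_prob E 0 u v = (if u = v then 1 else 0)"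
| "walk_prob E (Suc k) u v =
     (\<Sum>w\<in>out_nbrs E u. walk_prob E k w v / real (outdeg E u))"

text \<open>PPR: probability that the alpha-terminated walk from u stops at v
  (stops after exactly k moves with probability alpha (1-alpha)^k).\<close>
definition ppr :: "('a \<times> 'a) set \<Rightarrow> real \<Rightarrow> 'a \<Rightarrow> 'a \<Rightarrow> real" where
  "ppr E \<alpha> u v = (\<Sum>k. \<alpha> * (1 - \<alpha>) ^ k * walk_prob E k u v)"

definition ppr_d :: "('a \<times> 'a) set \<Rightarrow> real \<Rightarrow> 'a \<Rightarrow> 'a \<Rightarrow> real" where
  "ppr_d E \<alpha> u v = real (outdeg E u) * ppr E \<alpha> u v"

definition super_ok :: "'a set \<Rightarrow> 's set \<Rightarrow> ('s \<Rightarrow> 'a set) \<Rightarrow> bool" where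
  "super_ok V S F \<longleftrightarrow> finite S \<and> (\<forall>i\<in>S. F i \<noteq> {} \<and> F i \<subseteq> V)
     \<and> (\<forall>i\<in>S. \<forall>i'\<in>S. i \<noteq> i' \<longrightarrow> F i \<inter> F i' = {})"

definition ppr_d_super :: "('a \<times> 'a) set \<Rightarrow> real \<Rightarrow> ('s \<Rightarrow> 'a set) \<Rightarrow> 's \<Rightarrow> 's \<Rightarrow> real" where
  "ppr_d_super E \<alpha> F i j =
     (\<Sum>vs\<in>F i. \<Sum>vt\<in>F j. ppr_d E \<alpha> vs vt) / (real (card (F i)) * real (card (F j)))"

definition eps_delta_approx :: "real \<Rightarrow> real \<Rightarrow> real \<Rightarrow> real \<Rightarrow> bool" where
  "eps_delta_approx \<epsilon> \<delta> xhat x \<longleftrightarrow>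
     (x < \<delta> \<longrightarrow> \<bar>xhat - x\<bar> \<le> \<epsilon> * \<delta>) \<and> (x \<ge> \<delta> \<longrightarrow> \<bar>xhat - x\<bar> \<le> \<epsilon> * x)"

text \<open>GBP as a (nondeterministic) transition system on states (pihat, r).\<close>
definition gbp_init :: "('s \<Rightarrow> 'a set) \<Rightarrow> 's \<Rightarrow> ('s \<Rightarrow> real) \<times> ('a \<Rightarrow> real)" where
  "gbp_init F j = ((\<lambda>i. 0), (\<lambda>v. if v \<in> F j then 1 / real (card (F j)) else 0))"

definition gbp_step :: "'a set \<Rightarrow> ('a \<times> 'a) set \<Rightarrow> 's set \<Rightarrow> ('s \<Rightarrow> 'a set) \<Rightarrow> real \<Rightarrow> real
    \<Rightarrow> ('s \<Rightarrow> real) \<times> ('a \<Rightarrow> real) \<Rightarrow> ('s \<Rightarrow> real) \<times> ('a \<Rightarrow> real) \<Rightarrow> bool" where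
  "gbp_step V E S F \<alpha> rmax st st' \<longleftrightarrow>
     (\<exists>vk\<in>V. snd st vk > rmax \<and>
        st' = ((\<lambda>i. if i \<in> S \<and> vk \<in> F i
                     then fst st i + \<alpha> * real (outdeg E vk) * snd st vk / real (card (F i))
                     else fst st i),
               (\<lambda>v. if v = vk then 0
                    else snd st v + (if (v, vk) \<in> E
                                     then (1 - \<alpha>) * snd st vk / real (outdeg E v) else 0))))"

definition gbp_terminal :: "'a set \<Rightarrow> real \<Rightarrow> ('s \<Rightarrow> real) \<times> ('a \<Rightarrow> real) \<Rightarrow> bool" where
  "gbp_terminal V rmax st \<longleftrightarrow> \<not> (\<exists>v\<in>V. snd st v > rmax)"

end

theory Submission imports Defs begin

definition P :: "('a \<times> 'a) set \<Rightarrow> 'a \<Rightarrow> 'a \<Rightarrow> real" where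
  "P E w v = (if (w, v) \<in> E then 1 / real (outdeg E w) else 0)"

lemma out_sub: "E \<subseteq> V \<times> V \<Longrightarrow> out_nbrs E u \<subseteq> V"
  by (auto simp: out_nbrs_def)

lemma out_fin: "finite V \<Longrightarrow> E \<subseteq> V \<times> V \<Longrightarrow> finite (out_nbrs E u)"
  using out_sub finite_subset by metis

lemma wp_nonneg: "0 \<le> walk_prob E k u v"
  by (induction k arbitrary: u) (auto intro!: sum_nonneg divide_nonneg_nonneg)

lemma card_div_le1: "real (card A) / real (card A) \<le> 1"
  by (cases "card A = 0") auto

lemma wp_le1:
  assumes "finite V" "E \<subseteq> V \<times> V" shows "walk_prob E k u v \<le> 1"
proof (induction k arbitrary: u)
  case 0 show ?case by simp
next
  case (Suc k)
  have "walk_prob E (Suc k) u v \<le> (\<Sum>w\<in>out_nbrs E u. 1 / real (outdeg E u))"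
    unfolding walk_prob.simps by (intro sum_mono divide_right_mono) (auto simp: Suc)
  also have "\<dots> \<le> 1" using card_div_le1[of "out_nbrs E u"] by (simp add: outdeg_def)
  finally show ?case .
qed

lemma wp_sum_le1:
  assumes "finite V" "E \<subseteq> V \<times> V" shows "(\<Sum>v\<in>V. walk_prob E k u v) \<le> 1"
proof (induction k arbitrary: u)
  case 0 show ?case using assms by (cases "u \<in> V") auto
next
  case (Suc k)
  have "(\<Sum>v\<in>V. walk_prob E (Suc k) u v) = (\<Sum>w\<in>out_nbrs E u. (\<Sum>v\<in>V. walk_prob E k w v) / real (outdeg E u))"
    by (simp add: sum.swap[of _ V] sum_divide_distrib)
  also have "\<dots> \<le> (\<Sum>w\<in>out_nbrs E u. 1 / real (outdeg E u))"
    by (intro sum_mono divide_right_mono) (auto simp: Suc)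
  also have "\<dots> \<le> 1" using card_div_le1[of "out_nbrs E u"] by (simp add: outdeg_def)
  finally show ?case .
qed

lemma wp_back:
  assumes "finite V" "E \<subseteq> V \<times> V"
  shows "walk_prob E (Suc k) s v = (\<Sum>w\<in>V. walk_prob E k s w * P E w v)"
proof (induction k arbitrary: s)
  case 0
  have "walk_prob E (Suc 0) s v = (if v \<in> out_nbrs E s then 1 / real (outdeg E s) else 0)"
    using out_fin[OF assms] by (simp add: if_distrib[where f="\<lambda>x. x / _"] cong: if_cong)
  also have "\<dots> = (\<Sum>w\<in>V. walk_prob E 0 s w * P E w v)"
    using assms by (auto simp: P_def out_nbrs_def if_distrib[where f="\<lambda>x. x * _"] cong: if_cong)
  finally show ?case .
next
  case (Suc k)
  have "walk_prob E (Suc (Suc k)) s v = (\<Sum>w\<in>out_nbrs E s. (\<Sum>x\<in>V. walk_prob E k w x * P E x v) / real (outdeg E s))"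
    by (subst walk_prob.simps(2)) (simp only: Suc)
  also have "\<dots> = (\<Sum>x\<in>V. (\<Sum>w\<in>out_nbrs E s. walk_prob E k w x / real (outdeg E s)) * P E x v)"
    by (simp add: sum_divide_distrib sum_distrib_right sum.swap[of _ V])
  also have "\<dots> = (\<Sum>w\<in>V. walk_prob E (Suc k) s w * P E w v)" by simp
  finally show ?case .
qed


lemma geo_sums: "0 < \<alpha> \<Longrightarrow> \<alpha> < 1 \<Longrightarrow> (\<lambda>k. \<alpha> * (1 - \<alpha>) ^ k) sums (1::real)"
proof -
  assume a: "0 < \<alpha>" "\<alpha> < 1"
  have "(\<lambda>k. (1 - \<alpha>) ^ k) sums (1 / (1 - (1 - \<alpha>)))" by (rule geometric_sums) (use a in auto)
  from sums_mult[OF this, of \<alpha>] show ?thesis using a by simp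
qed

lemma ppr_summable:
  assumes "finite V" "E \<subseteq> V \<times> V" "0 < \<alpha>" "\<alpha> < 1"
  shows "summable (\<lambda>k. \<alpha> * (1 - \<alpha>) ^ k * walk_prob E k u v)"
proof (rule summable_comparison_test)
  show "\<exists>N. \<forall>n\<ge>N. norm (\<alpha> * (1 - \<alpha>) ^ n * walk_prob E n u v) \<le> \<alpha> * (1 - \<alpha>) ^ n"
    using assms wp_nonneg[of E] wp_le1[OF assms(1,2)]
    by (intro exI[of _ 0] allI impI) (simp add: abs_mult mult_left_le)
  show "summable (\<lambda>k. \<alpha> * (1 - \<alpha>) ^ k)" using geo_sums assms sums_summable by blast
qed

lemma ppr_sums:
  assumes "finite V" "E \<subseteq> V \<times> V" "0 < \<alpha>" "\<alpha> < 1"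
  shows "(\<lambda>k. \<alpha> * (1 - \<alpha>) ^ k * walk_prob E k u v) sums ppr E \<alpha> u v"
  unfolding ppr_def using ppr_summable[OF assms] by (rule summable_sums)

lemma ppr_nonneg:
  assumes "finite V" "E \<subseteq> V \<times> V" "0 < \<alpha>" "\<alpha> < 1"
  shows "0 \<le> ppr E \<alpha> u v"
  using sums_le[OF _ sums_zero ppr_sums[OF assms]] assms wp_nonneg[of E] by simp

lemma ppr_sum_le1:
  assumes "finite V" "E \<subseteq> V \<times> V" "0 < \<alpha>" "\<alpha> < 1"
  shows "(\<Sum>v\<in>V. ppr E \<alpha> u v) \<le> 1"
proof -
  have A: "(\<lambda>k. \<Sum>v\<in>V. \<alpha> * (1 - \<alpha>) ^ k * walk_prob E k u v) sums (\<Sum>v\<in>V. ppr E \<alpha> u v)"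
    by (rule sums_sum) (rule ppr_sums[OF assms])
  have B: "(\<Sum>v\<in>V. \<alpha> * (1 - \<alpha>) ^ k * walk_prob E k u v) \<le> \<alpha> * (1 - \<alpha>) ^ k" for k
  proof -
    have "(\<Sum>v\<in>V. \<alpha> * (1 - \<alpha>) ^ k * walk_prob E k u v) = \<alpha> * (1 - \<alpha>) ^ k * (\<Sum>v\<in>V. walk_prob E k u v)"
      by (simp add: sum_distrib_left)
    also have "\<dots> \<le> \<alpha> * (1 - \<alpha>) ^ k * 1"
      using assms wp_sum_le1[OF assms(1,2)] by (intro mult_left_mono) auto
    finally show ?thesis by simp
  qed
  show ?thesis by (rule sums_le[OF B A geo_sums[OF assms(3,4)]])
qed

lemma ppr_back:
  assumes "finite V" "E \<subseteq> V \<times> V" "0 < \<alpha>" "\<alpha> < 1"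
  shows "ppr E \<alpha> s v = \<alpha> * (if s = v then 1 else 0) + (1 - \<alpha>) * (\<Sum>w\<in>V. ppr E \<alpha> s w * P E w v)"
proof -
  let ?f = "\<lambda>k. \<alpha> * (1 - \<alpha>) ^ k * walk_prob E k s v"
  have "(\<lambda>k. \<Sum>w\<in>V. \<alpha> * (1 - \<alpha>) ^ k * walk_prob E k s w * P E w v) sums (\<Sum>w\<in>V. ppr E \<alpha> s w * P E w v)"
    by (rule sums_sum) (rule sums_mult2[OF ppr_sums[OF assms]])
  from sums_mult[OF this, of "1 - \<alpha>"]
  have "(\<lambda>k. ?f (Suc k)) sums ((1 - \<alpha>) * (\<Sum>w\<in>V. ppr E \<alpha> s w * P E w v))"
    unfolding wp_back[OF assms(1,2)]
    by (simp add: sum_distrib_left mult.assoc mult.left_commute)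
  hence "?f sums ((1 - \<alpha>) * (\<Sum>w\<in>V. ppr E \<alpha> s w * P E w v) + ?f 0)"
    by (rule sums_Suc)
  from sums_unique2[OF ppr_sums[OF assms] this] show ?thesis by simp
qed


lemma ppr_d_back:
  assumes "finite V" "E \<subseteq> V \<times> V" "0 < \<alpha>" "\<alpha> < 1"
  shows "ppr_d E \<alpha> s v = \<alpha> * real (outdeg E s) * (if s = v then 1 else 0)
          + (1 - \<alpha>) * (\<Sum>w\<in>V. ppr_d E \<alpha> s w * P E w v)"
  unfolding ppr_d_def ppr_back[OF assms, of s v]
  by (simp add: algebra_simps sum_distrib_left)

definition R :: "'a set \<Rightarrow> ('a \<times> 'a) set \<Rightarrow> real \<Rightarrow> ('a \<Rightarrow> real) \<Rightarrow> 'a \<Rightarrow> real" where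
  "R V E \<alpha> r s = (\<Sum>v\<in>V. ppr_d E \<alpha> s v * r v)"

lemma R_step:
  assumes "finite V" "E \<subseteq> V \<times> V" "0 < \<alpha>" "\<alpha> < 1" "\<forall>v. (v, v) \<notin> E" "vk \<in> V"
  shows "R V E \<alpha> (\<lambda>v. if v = vk then 0
                    else r v + (if (v, vk) \<in> E
                                     then (1 - \<alpha>) * r vk / real (outdeg E v) else 0)) s
       = R V E \<alpha> r s - \<alpha> * real (outdeg E s) * (if s = vk then 1 else 0) * r vk"
proof -
  have e: "(if v = vk then 0
                    else r v + (if (v, vk) \<in> E
                                     then (1 - \<alpha>) * r vk / real (outdeg E v) else 0))
        = r v + r vk * ((1 - \<alpha>) * P E v vk) - r vk * (if v = vk then 1 else 0)" for v
    using assms(5) by (auto simp: P_def)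
  have "R V E \<alpha> (\<lambda>v. if v = vk then 0
                    else r v + (if (v, vk) \<in> E
                                     then (1 - \<alpha>) * r vk / real (outdeg E v) else 0)) s
     = R V E \<alpha> r s + r vk * ((1 - \<alpha>) * (\<Sum>v\<in>V. ppr_d E \<alpha> s v * P E v vk))
       - r vk * (\<Sum>v\<in>V. ppr_d E \<alpha> s v * (if v = vk then 1 else 0))"
    unfolding R_def e by (simp add: algebra_simps sum.distrib sum_subtractf sum_distrib_left)
  also have "(\<Sum>v\<in>V. ppr_d E \<alpha> s v * (if v = vk then 1 else 0)) = ppr_d E \<alpha> s vk"
    using assms(1,6) by (simp add: if_distrib[where f="\<lambda>x. _ * x"] cong: if_cong)
  also have "ppr_d E \<alpha> s vk = \<alpha> * real (outdeg E s) * (if s = vk then 1 else 0)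
          + (1 - \<alpha>) * (\<Sum>w\<in>V. ppr_d E \<alpha> s w * P E w vk)" by (rule ppr_d_back[OF assms(1-4)])
  finally show ?thesis by (simp add: algebra_simps)
qed

lemma R_nonneg:
  assumes "finite V" "E \<subseteq> V \<times> V" "0 < \<alpha>" "\<alpha> < 1" "\<forall>v. 0 \<le> r v"
  shows "0 \<le> R V E \<alpha> r s"
  unfolding R_def ppr_d_def using assms ppr_nonneg[OF assms(1-4)]
  by (intro sum_nonneg mult_nonneg_nonneg) auto

lemma R_le:
  assumes "finite V" "E \<subseteq> V \<times> V" "0 < \<alpha>" "\<alpha> < 1" "\<forall>v\<in>V. r v \<le> c" "0 \<le> c"
  shows "R V E \<alpha> r s \<le> c * real (outdeg E s)"
proof -
  have "R V E \<alpha> r s \<le> (\<Sum>v\<in>V. ppr_d E \<alpha> s v * c)"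
    unfolding R_def using assms ppr_nonneg[OF assms(1-4)]
    by (intro sum_mono mult_left_mono) (auto simp: ppr_d_def)
  also have "\<dots> = c * real (outdeg E s) * (\<Sum>v\<in>V. ppr E \<alpha> s v)"
    by (simp add: ppr_d_def sum_distrib_left sum_distrib_right algebra_simps)
  also have "\<dots> \<le> c * real (outdeg E s) * 1"
    using assms ppr_sum_le1[OF assms(1-4)] by (intro mult_left_mono) auto
  finally show ?thesis by simp
qed


theorem lemma3:
  fixes V :: "'a set" and E :: "('a \<times> 'a) set" and S :: "'s set" and F :: "'s \<Rightarrow> 'a set"
    and \<alpha> \<epsilon> \<delta> rmax :: real and j :: 's
  assumes "graph_ok V E"
    and "0 < \<alpha>" and "\<alpha> < 1"
    and "super_ok V S F"
    and "card S \<ge> 2"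
    and "\<epsilon> > 0" and "\<delta> > 0"
    and "j \<in> S"
    and "rmax = \<epsilon> * \<delta> /
           Max ((\<lambda>i. (\<Sum>vs\<in>F i. real (outdeg E vs)) / real (card (F i))) ` (S - {j}))"
  shows "(\<nexists>f. f 0 = gbp_init F j \<and> (\<forall>n. gbp_step V E S F \<alpha> rmax (f n) (f (Suc n))))
    \<and> (\<forall>st. (gbp_step V E S F \<alpha> rmax)\<^sup>*\<^sup>* (gbp_init F j) st \<and> gbp_terminal V rmax st \<longrightarrow>
          (\<forall>i\<in>S - {j}. eps_delta_approx \<epsilon> \<delta> (fst st i) (ppr_d_super E \<alpha> F i j)))"
proof -
  have fV: "finite V" and EV: "E \<subseteq> V \<times> V" and nl: "\<forall>v. (v, v) \<notin> E"
    and deg: "\<And>v. v \<in> V \<Longrightarrow> outdeg E v \<ge> 1"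
    using assms(1) by (auto simp: graph_ok_def)
  have fS: "finite S" and Fne: "\<And>i. i \<in> S \<Longrightarrow> F i \<noteq> {}" and FV: "\<And>i. i \<in> S \<Longrightarrow> F i \<subseteq> V"
    and disj: "\<And>i i'. i \<in> S \<Longrightarrow> i' \<in> S \<Longrightarrow> i \<noteq> i' \<Longrightarrow> F i \<inter> F i' = {}"
    using assms(4) by (auto simp: super_ok_def)
  have fF: "\<And>i. i \<in> S \<Longrightarrow> finite (F i)" using FV fV finite_subset by metis
  have cF: "\<And>i. i \<in> S \<Longrightarrow> real (card (F i)) > 0" using fF Fne by (simp add: card_gt_0_iff)
  note base = fV EV assms(2,3)
  define r0 where "r0 = snd (gbp_init F j)"
  define Inv where "Inv st \<longleftrightarrow> (\<forall>v. 0 \<le> snd st v) \<and>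
     (\<forall>i\<in>S. fst st i * real (card (F i)) + (\<Sum>s\<in>F i. R V E \<alpha> (snd st) s) = (\<Sum>s\<in>F i. R V E \<alpha> r0 s))"
    for st :: "('s \<Rightarrow> real) \<times> ('a \<Rightarrow> real)"
  define \<Phi> where "\<Phi> st = (\<Sum>u\<in>V. R V E \<alpha> (snd st) u)" for st :: "('s \<Rightarrow> real) \<times> ('a \<Rightarrow> real)"
  have init: "Inv (gbp_init F j)"
    unfolding Inv_def r0_def by (auto simp: gbp_init_def)
  have Phi_nonneg: "Inv st \<Longrightarrow> 0 \<le> \<Phi> st" for st
    unfolding \<Phi>_def Inv_def using R_nonneg[OF base] by (auto intro!: sum_nonneg)
  have stepI: "Inv st' \<and> \<Phi> st' \<le> \<Phi> st - \<alpha> * rmax"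
    if st: "gbp_step V E S F \<alpha> rmax st st'" and inv: "Inv st" for st st'
  proof -
    obtain p r where pr: "st = (p, r)" by fastforce
    from st obtain vk where vk: "vk \<in> V" "r vk > rmax" and st': "st' = ((\<lambda>i. if i \<in> S \<and> vk \<in> F i
                     then p i + \<alpha> * real (outdeg E vk) * r vk / real (card (F i))
                     else p i),
               (\<lambda>v. if v = vk then 0
                    else r v + (if (v, vk) \<in> E
                                     then (1 - \<alpha>) * r vk / real (outdeg E v) else 0)))"
      unfolding gbp_step_def pr fst_conv snd_conv by blast
    have rnn: "\<forall>v. 0 \<le> r v" using inv pr by (simp add: Inv_def)
    have Rs: "R V E \<alpha> (snd st') s = R V E \<alpha> r s - \<alpha> * real (outdeg E s) * (if s = vk then 1 else 0) * r vk" for s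
      unfolding st' snd_conv by (rule R_step[OF base nl vk(1)])
    have nn': "\<forall>v. 0 \<le> snd st' v"
      unfolding st' using rnn assms(3) by (auto intro!: add_nonneg_nonneg divide_nonneg_nonneg)
    have inv2: "fst st' i * real (card (F i)) + (\<Sum>s\<in>F i. R V E \<alpha> (snd st') s) = (\<Sum>s\<in>F i. R V E \<alpha> r0 s)"
      if i: "i \<in> S" for i
    proof -
      have old: "p i * real (card (F i)) + (\<Sum>s\<in>F i. R V E \<alpha> r s) = (\<Sum>s\<in>F i. R V E \<alpha> r0 s)"
        using inv i pr by (auto simp: Inv_def)
      have sumd: "(\<Sum>s\<in>F i. \<alpha> * real (outdeg E s) * (if s = vk then 1 else 0) * r vk)
          = (if vk \<in> F i then \<alpha> * real (outdeg E vk) * r vk else 0)"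
        using fF[OF i] by (simp add: if_distrib[where f="\<lambda>x. _ * x"] if_distrib[where f="\<lambda>x. x * _"] cong: if_cong)
      show ?thesis
        using old cF[OF i] i unfolding Rs sum_subtractf sumd
        by (auto simp: st' field_simps) (simp add: old[symmetric] algebra_simps)
    qed
    have "\<Phi> st' = \<Phi> st - \<alpha> * real (outdeg E vk) * r vk"
      unfolding \<Phi>_def Rs sum_subtractf using fV vk(1) pr
      by (simp add: if_distrib[where f="\<lambda>x. _ * x"] if_distrib[where f="\<lambda>x. x * _"] cong: if_cong)
    moreover have "\<alpha> * rmax \<le> \<alpha> * real (outdeg E vk) * r vk"
    proof -
      have "rmax \<le> 1 * r vk" using vk by simp
      also have "\<dots> \<le> real (outdeg E vk) * r vk"
        using deg[OF vk(1)] rnn by (intro mult_right_mono) auto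
      finally show ?thesis using assms(2) by (simp add: mult.assoc)
    qed
    ultimately show ?thesis using nn' inv2 unfolding Inv_def by auto
  qed
  let ?avg = "\<lambda>i. (\<Sum>vs\<in>F i. real (outdeg E vs)) / real (card (F i))"
  define M where "M = Max (?avg ` (S - {j}))"
  have Sj: "S - {j} \<noteq> {}"
  proof
    assume "S - {j} = {}"
    hence "S \<subseteq> {j}" by auto
    hence "card S \<le> 1" using card_mono[of "{j}" S] by simp
    thus False using assms(5) by simp
  qed
  have avgM: "?avg i \<le> M" if "i \<in> S - {j}" for i
    unfolding M_def using fS that by (intro Max_ge) auto
  have avgpos: "?avg i > 0" if "i \<in> S" for i
  proof -
    have "(\<Sum>vs\<in>F i. real (outdeg E vs)) > 0"
      using fF[OF that] Fne[OF that] FV[OF that] deg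
      by (intro sum_pos) (auto, force)
    thus ?thesis using cF[OF that] by simp
  qed
  have Mpos: "M > 0" using Sj avgM avgpos by (metis Diff_iff ex_in_conv order_less_le_trans)
  have rpos: "rmax > 0" using assms(6,7,9) Mpos M_def by simp
  have part1: "\<nexists>f. f 0 = gbp_init F j \<and> (\<forall>n. gbp_step V E S F \<alpha> rmax (f n) (f (Suc n)))"
  proof
    assume "\<exists>f. f 0 = gbp_init F j \<and> (\<forall>n. gbp_step V E S F \<alpha> rmax (f n) (f (Suc n)))"
    then obtain f where f0: "f 0 = gbp_init F j" and fs: "\<And>n. gbp_step V E S F \<alpha> rmax (f n) (f (Suc n))"
      by blast
    have I: "Inv (f n) \<and> \<Phi> (f n) \<le> \<Phi> (f 0) - real n * (\<alpha> * rmax)" for n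
    proof (induction n)
      case 0 show ?case using init f0 by simp
    next
      case (Suc n)
      with stepI[OF fs[of n]] show ?case by (auto simp: algebra_simps)
    qed
    obtain n where n: "\<Phi> (f 0) / (\<alpha> * rmax) < real n" using reals_Archimedean2 by blast
    have ar: "\<alpha> * rmax > 0" using assms(2) rpos by simp
    hence "\<Phi> (f 0) < real n * (\<alpha> * rmax)" using n by (simp add: pos_divide_less_eq)
    with I[of n] Phi_nonneg[of "f n"] show False by linarith
  qed
  have part2: "eps_delta_approx \<epsilon> \<delta> (fst st i) (ppr_d_super E \<alpha> F i j)"
    if rt: "(gbp_step V E S F \<alpha> rmax)\<^sup>*\<^sup>* (gbp_init F j) st" and tm: "gbp_terminal V rmax st"
      and i: "i \<in> S - {j}" for st i
  proof -
    have inv: "Inv st" using rt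
    proof (induction rule: rtranclp_induct)
      case base show ?case by (rule init)
    next
      case (step y z) with stepI show ?case by blast
    qed
    have iS: "i \<in> S" using i by auto
    let ?c = "real (card (F i))"
    have r0s: "R V E \<alpha> r0 s = (\<Sum>t\<in>F j. ppr_d E \<alpha> s t) / real (card (F j))" for s
    proof -
      have "R V E \<alpha> r0 s = (\<Sum>v\<in>V. if v \<in> F j then ppr_d E \<alpha> s v / real (card (F j)) else 0)"
        unfolding R_def r0_def gbp_init_def by (intro sum.cong) auto
      also have "\<dots> = (\<Sum>v\<in>V \<inter> F j. ppr_d E \<alpha> s v / real (card (F j)))"
        by (rule sum.inter_restrict[symmetric]) (rule fV)
      also have "V \<inter> F j = F j" using FV[OF assms(8)] by auto
      finally show ?thesis by (simp add: sum_divide_distrib)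
    qed
    have x: "ppr_d_super E \<alpha> F i j = (\<Sum>s\<in>F i. R V E \<alpha> r0 s) / ?c"
      unfolding ppr_d_super_def r0s by (simp add: sum_divide_distrib mult.commute)
    have eq: "fst st i * ?c + (\<Sum>s\<in>F i. R V E \<alpha> (snd st) s) = (\<Sum>s\<in>F i. R V E \<alpha> r0 s)"
      using inv iS by (auto simp: Inv_def)
    have diff: "ppr_d_super E \<alpha> F i j - fst st i = (\<Sum>s\<in>F i. R V E \<alpha> (snd st) s) / ?c"
      unfolding x using cF[OF iS] eq[symmetric] by (simp add: field_simps)
    have rnn: "\<forall>v. 0 \<le> snd st v" using inv by (simp add: Inv_def)
    have rle: "\<forall>v\<in>V. snd st v \<le> rmax" using tm by (auto simp: gbp_terminal_def not_less)
    have d0: "0 \<le> ppr_d_super E \<alpha> F i j - fst st i"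
      unfolding diff using cF[OF iS] R_nonneg[OF base rnn] by (auto intro!: sum_nonneg divide_nonneg_nonneg)
    have "ppr_d_super E \<alpha> F i j - fst st i \<le> (\<Sum>s\<in>F i. rmax * real (outdeg E s)) / ?c"
      unfolding diff using cF[OF iS] R_le[OF base rle] rpos
      by (intro divide_right_mono sum_mono) auto
    also have "\<dots> = rmax * ?avg i" by (simp add: sum_distrib_left)
    also have "\<dots> \<le> rmax * M" using avgM[OF i] rpos by (intro mult_left_mono) auto
    also have "\<dots> = \<epsilon> * \<delta>" using assms(9) M_def Mpos by simp
    finally have d1: "ppr_d_super E \<alpha> F i j - fst st i \<le> \<epsilon> * \<delta>" .
    show ?thesis unfolding eps_delta_approx_def
    proof (intro conjI impI)
      show "\<bar>fst st i - ppr_d_super E \<alpha> F i j\<bar> \<le> \<epsilon> * \<delta>" using d0 d1 by simp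
      assume "\<delta> \<le> ppr_d_super E \<alpha> F i j"
      hence "\<epsilon> * \<delta> \<le> \<epsilon> * ppr_d_super E \<alpha> F i j" using assms(6) by simp
      thus "\<bar>fst st i - ppr_d_super E \<alpha> F i j\<bar> \<le> \<epsilon> * ppr_d_super E \<alpha> F i j" using d0 d1 by simp
    qed
  qed
  show ?thesis using part1 part2 by blast
qed

end
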